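(* Let $\Gamma\cong\mathbb{Z}^n$ act freely, properly discontinuously and cocompactly by isometries on a length space $(X,d)$, let $x_0\in X$, and let $D\ge\operatorname{diam}(\Gamma\backslash X)$. Let $\Sigma_D=\{\gamma\in\Gamma\setminus\{e\}: d(\gamma x_0,x_0)\le 3D\}$ (a generating set of $\Gamma$), let $\Sigma_n=\{\gamma_1,\dots,\gamma_n\}\subset\Sigma_D$ be $n$ linearly independent elements, and $\mathcal Z=\langle\Sigma_n\rangle$. Let $S=\{s_0=e,s_1,\dots,s_d\}$ be a set of representatives of the cosets of $\Gamma/\mathcal Z$, each of minimal $d_{\Sigma_D}$-word length in its coset, and let $\widehat\Sigma_n=\{s_i\sigma s_j^{-1}: s_i,s_j\in S,\ \sigma\in\Sigma_D,\ s_i\sigma s_j^{-1}\in\mathcal Z\setminus\{e\}\}$. Then for all $\gamma\in\mathcal Z$, $$|\gamma|_{\widehat\Sigma_n}\le|\gamma|_{\Sigma_D}\le(2[\Gamma:\mathcal Z]+1)\,|\gamma|_{\widehat\Sigma_n}.$$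
   Context: For a generating set $\Sigma$ of a group, $|\gamma|_\Sigma$ denotes the word length of $\gamma$ with respect to $\Sigma$ and $d_\Sigma$ the associated word metric; $|\gamma|_{\widehat\Sigma_n}$ is the word length in $\mathcal Z$ with respect to $\widehat\Sigma_n$ (which generates $\mathcal Z$). *)

theory Defs
  imports "HOL-Analysis.Analysis"
begin

text \<open>The group Gamma = Z^n is modelled as the additive group int ^ 'n (n = CARD('n)).\<close>

definition word_length :: "('a::group_add) set \<Rightarrow> 'a \<Rightarrow> nat" where
  "word_length \<Sigma> g = (LEAST k. \<exists>xs. length xs = k \<and> set xs \<subseteq> \<Sigma> \<union> uminus ` \<Sigma> \<and> sum_list xs = g)"

definition int_lin_indep :: "(int ^ 'n) set \<Rightarrow> bool" where
  "int_lin_indep V \<longleftrightarrow> (\<forall>c. (\<Sum>v\<in>V. c v *s v) = 0 \<longrightarrow> (\<forall>v\<in>V. c v = 0))"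

definition int_span :: "(int ^ 'n) set \<Rightarrow> (int ^ 'n) set" where
  "int_span V = {(\<Sum>v\<in>V. c v *s v) | c. True}"

definition group_index :: "(int ^ 'n) set \<Rightarrow> nat" where
  "group_index Z = card {(\<lambda>z. g + z) ` Z | g. True}"

definition length_space :: "'x::metric_space itself \<Rightarrow> bool" where
  "length_space _ \<longleftrightarrow> (\<forall>x y::'x. \<forall>\<epsilon>>0. \<exists>p::real \<Rightarrow> 'x.
      continuous_on {0..1} p \<and> p 0 = x \<and> p 1 = y \<and>
      (\<forall>ts. sorted ts \<and> set ts \<subseteq> {0..1} \<longrightarrow>
         (\<Sum>i<length ts - 1. dist (p (ts ! i)) (p (ts ! Suc i))) \<le> dist x y + \<epsilon>))"

definition isometric_action :: "(int ^ 'n \<Rightarrow> 'x::metric_space \<Rightarrow> 'x) \<Rightarrow> bool" where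
  "isometric_action act \<longleftrightarrow> (\<forall>x. act 0 x = x) \<and> (\<forall>g h x. act (g + h) x = act g (act h x))
     \<and> (\<forall>g x y. dist (act g x) (act g y) = dist x y)"

definition free_action :: "(int ^ 'n \<Rightarrow> 'x \<Rightarrow> 'x) \<Rightarrow> bool" where
  "free_action act \<longleftrightarrow> (\<forall>g x. act g x = x \<longrightarrow> g = 0)"

definition properly_discontinuous :: "(int ^ 'n \<Rightarrow> 'x::topological_space \<Rightarrow> 'x) \<Rightarrow> bool" where
  "properly_discontinuous act \<longleftrightarrow> (\<forall>K. compact K \<longrightarrow> finite {g. act g ` K \<inter> K \<noteq> {}})"

definition cocompact :: "(int ^ 'n \<Rightarrow> 'x::topological_space \<Rightarrow> 'x) \<Rightarrow> bool" where
  "cocompact act \<longleftrightarrow> (\<exists>K. compact K \<and> (\<Union>g. act g ` K) = UNIV)"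

text \<open>D bounds the diameter of the quotient metric d(Gx,Gy) = inf_g d(x, g y).\<close>
definition quotient_diam_le :: "(int ^ 'n \<Rightarrow> 'x::metric_space \<Rightarrow> 'x) \<Rightarrow> real \<Rightarrow> bool" where
  "quotient_diam_le act D \<longleftrightarrow> (\<forall>x y. (INF g. dist x (act g y)) \<le> D)"

end

theory Submission
  imports Defs
begin


lemma wl_le: "set xs \<subseteq> \<Sigma> \<union> uminus ` \<Sigma> \<Longrightarrow> sum_list xs = g \<Longrightarrow> word_length \<Sigma> g \<le> length xs"
  unfolding word_length_def by (rule Least_le) auto

lemma wl_ex: "set xs \<subseteq> \<Sigma> \<union> uminus ` \<Sigma> \<Longrightarrow> sum_list xs = g \<Longrightarrow>
   \<exists>ys. length ys = word_length \<Sigma> g \<and> set ys \<subseteq> \<Sigma> \<union> uminus ` \<Sigma> \<and> sum_list ys = g"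
  unfolding word_length_def by (rule LeastI_ex) auto

lemma sum_list_neg: "sum_list (map uminus xs) = - sum_list (xs :: 'a::ab_group_add list)"
  by (induct xs) auto

lemma neg_word: "set xs \<subseteq> T \<union> uminus ` T \<Longrightarrow> set (map uminus xs) \<subseteq> T \<union> uminus ` (T::'a::group_add set)"
  by (auto simp: image_iff)

lemma span_add: "a \<in> int_span V \<Longrightarrow> b \<in> int_span V \<Longrightarrow> a + b \<in> int_span V"
proof -
  assume "a \<in> int_span V" "b \<in> int_span V"
  then obtain c1 c2 where "a = (\<Sum>v\<in>V. c1 v *s v)" "b = (\<Sum>v\<in>V. c2 v *s v)" unfolding int_span_def by auto
  then have "a + b = (\<Sum>v\<in>V. (c1 v + c2 v) *s v)" by (simp add: sum.distrib vector_sadd_rdistrib)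
  then show ?thesis unfolding int_span_def by (auto intro!: exI[of _ "\<lambda>v. c1 v + c2 v"])
qed

lemma span_smult: "a \<in> int_span V \<Longrightarrow> k *s a \<in> int_span V"
proof -
  assume "a \<in> int_span V"
  then obtain c1 where "a = (\<Sum>v\<in>V. c1 v *s v)" unfolding int_span_def by auto
  then have "k *s a = (\<Sum>v\<in>V. (k * c1 v) *s v)"
    by (simp add: vec_eq_iff sum_distrib_left mult.assoc)
  then show ?thesis unfolding int_span_def by (auto intro!: exI[of _ "\<lambda>v. k * c1 v"])
qed

lemma span_zero: "0 \<in> int_span V"
  unfolding int_span_def by (rule CollectI, rule exI[of _ "\<lambda>_. 0"]) auto

lemma span_neg: "a \<in> int_span V \<Longrightarrow> - a \<in> int_span V"
  using span_smult[of a V "-1"] by (simp add: vector_sneg_minus1[symmetric])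

lemma span_diff: "a \<in> int_span V \<Longrightarrow> b \<in> int_span V \<Longrightarrow> a - b \<in> int_span V"
  using span_add span_neg by (metis diff_conv_add_uminus)

lemma span_base: "finite V \<Longrightarrow> v \<in> V \<Longrightarrow> v \<in> int_span V"
proof -
  assume "finite V" "v \<in> V"
  then have "(\<Sum>w\<in>V. (if w = v then 1 else 0) *s w) = v"
  proof -
    have "(\<Sum>w\<in>V. (if w = v then 1 else 0) *s w) = (\<Sum>w\<in>V. (if w = v then v else 0))"
      by (rule sum.cong) auto
    also have "\<dots> = v" using \<open>finite V\<close> \<open>v \<in> V\<close> by simp
    finally show ?thesis .
  qed
  then show ?thesis unfolding int_span_def by (auto intro!: exI[of _ "\<lambda>w. if w = v then 1 else 0"])
qed



lemma tele:
  fixes Z S \<Sigma> H :: "'a::ab_group_add set" and rep :: "'a \<Rightarrow> 'a"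
  assumes Zsub: "\<And>a b. a\<in>Z \<Longrightarrow> b\<in>Z \<Longrightarrow> a - b \<in> Z"
  and rep: "\<And>g. rep g \<in> S \<and> g - rep g \<in> Z"
  and Hmem: "\<And>si sj \<sigma>. si \<in> S \<Longrightarrow> sj \<in> S \<Longrightarrow> \<sigma> \<in> \<Sigma> \<Longrightarrow> si+\<sigma>-sj \<in> Z-{0} \<Longrightarrow> si+\<sigma>-sj \<in> H"
  shows "set xs \<subseteq> \<Sigma> \<union> uminus ` \<Sigma> \<Longrightarrow> \<exists>ys. length ys \<le> length xs \<and> set ys \<subseteq> H \<union> uminus ` H
     \<and> sum_list ys = rep a + sum_list xs - rep (a + sum_list xs)"
proof (induction xs arbitrary: a)
  case Nil
  then show ?case by auto
next
  case (Cons x xs)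
  have "set xs \<subseteq> \<Sigma> \<union> uminus ` \<Sigma>" using Cons.prems by auto
  with Cons.IH[of "a + x"] obtain ys' where ys': "length ys' \<le> length xs" "set ys' \<subseteq> H \<union> uminus ` H"
     "sum_list ys' = rep (a + x) + sum_list xs - rep (a + x + sum_list xs)" by blast
  define t where "t = rep a + x - rep (a + x)"
  have tZ: "t \<in> Z"
  proof -
    have "(a + x - rep (a + x)) - (a - rep a) \<in> Z" using Zsub rep by blast
    moreover have "(a + x - rep (a + x)) - (a - rep a) = t" unfolding t_def by (simp add: algebra_simps)
    ultimately show ?thesis by simp
  qed
  have sumeq: "t + sum_list ys' = rep a + sum_list (x # xs) - rep (a + sum_list (x # xs))"
    using ys'(3) unfolding t_def by (simp add: algebra_simps)
  show ?case
  proof (cases "t = 0")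
    case True
    then show ?thesis using ys' sumeq by (intro exI[of _ ys']) auto
  next
    case False
    have "t \<in> H \<union> uminus ` H"
    proof -
      have "x \<in> \<Sigma> \<or> x \<in> uminus ` \<Sigma>" using Cons.prems by auto
      then show ?thesis
      proof
        assume "x \<in> \<Sigma>"
        then have "t \<in> H" unfolding t_def using Hmem[of "rep a" "rep (a+x)" x] tZ False rep[of a] rep[of "a+x"] t_def by simp
        then show ?thesis by blast
      next
        assume "x \<in> uminus ` \<Sigma>"
        then obtain \<tau> where \<tau>: "\<tau> \<in> \<Sigma>" "x = - \<tau>" by auto
        have e: "- t = rep (a + x) + \<tau> - rep a" unfolding t_def \<tau> by (simp add: algebra_simps)
        have "- t \<in> Z" using Zsub[of 0 t] tZ Zsub[of t t] by simp
        moreover have "- t \<noteq> 0" using False by simp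
        ultimately have "rep (a + x) + \<tau> - rep a \<in> Z - {0}" using e by simp
        then have "- t \<in> H" unfolding e using \<tau>(1) rep[of a] rep[of "a+x"] Hmem by blast
        then have "t = - (- t)" "-t \<in> H" by auto
        then show ?thesis by blast
      qed
    qed
    then show ?thesis using ys' sumeq by (intro exI[of _ "t # ys'"]) auto
  qed
qed



lemma concat_words:
  "\<forall>y\<in>set ys. \<exists>xs. length xs \<le> B \<and> set xs \<subseteq> T \<and> sum_list xs = y \<Longrightarrow>
   \<exists>xs. length xs \<le> B * length ys \<and> set xs \<subseteq> T \<and> sum_list xs = (sum_list ys :: 'a::monoid_add)"
proof (induction ys)
  case Nil
  then show ?case by (intro exI[of _ "[]"]) auto
next
  case (Cons y ys)
  then obtain xs where xs: "length xs \<le> B" "set xs \<subseteq> T" "sum_list xs = y" by auto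
  from Cons obtain zs where zs: "length zs \<le> B * length ys" "set zs \<subseteq> T" "sum_list zs = sum_list ys" by auto
  show ?case using xs zs by (intro exI[of _ "xs @ zs"]) auto
qed



lemma rep_bound:
  fixes Z \<Sigma> :: "'a::ab_group_add set"
  assumes Z0: "0 \<in> Z" and Zsub: "\<And>a b. a\<in>Z \<Longrightarrow> b\<in>Z \<Longrightarrow> a - b \<in> Z"
  and fin: "finite {(\<lambda>z. g + z) ` Z | g. True}"
  and gen: "\<exists>xs. set xs \<subseteq> \<Sigma> \<union> uminus ` \<Sigma> \<and> sum_list xs = s"
  and minl: "\<And>g. g - s \<in> Z \<Longrightarrow> word_length \<Sigma> s \<le> word_length \<Sigma> g"
  shows "word_length \<Sigma> s < card {(\<lambda>z. g + z) ` Z | g. True}"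
proof -
  let ?C = "{(\<lambda>z. g + z) ` Z | g. True}"
  let ?L = "word_length \<Sigma> s"
  obtain xs where xs: "length xs = ?L" "set xs \<subseteq> \<Sigma> \<union> uminus ` \<Sigma>" "sum_list xs = s"
    using gen wl_ex by blast
  define f where "f j = (\<lambda>z. sum_list (take j xs) + z) ` Z" for j
  have neq: "f a \<noteq> f b" if ab: "a < b" "b \<le> ?L" for a b
  proof
    assume eq: "f a = f b"
    have "sum_list (take b xs) \<in> f b" unfolding f_def using Z0 by force
    then obtain z where z: "z \<in> Z" "sum_list (take b xs) = sum_list (take a xs) + z"
      using eq unfolding f_def by auto
    define ws where "ws = take a xs @ drop b xs"
    have s_split: "s = sum_list (take b xs) + sum_list (drop b xs)"
      using xs(3) by (metis append_take_drop_id sum_list_append)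
    have alg: "\<And>s pb d pa z. s = pb + d \<Longrightarrow> pb = pa + z \<Longrightarrow> pa + d = s - (z::'a)"
      by (simp add: algebra_simps)
    have sws: "sum_list ws = s - z" unfolding ws_def sum_list_append
      by (rule alg[OF s_split z(2)])
    have "set ws \<subseteq> set xs" unfolding ws_def using set_take_subset[of a xs] set_drop_subset[of b xs] by auto
    then have setws: "set ws \<subseteq> \<Sigma> \<union> uminus ` \<Sigma>" using xs(2) by blast
    have "(s - z) - s \<in> Z" using Zsub[OF Z0 z(1)] by simp
    then have "?L \<le> word_length \<Sigma> (s - z)" by (rule minl)
    also have "\<dots> \<le> length ws" using wl_le[OF setws sws] .
    also have "length ws = a + (?L - b)" unfolding ws_def using ab xs(1) by auto
    finally show False using ab by linarith
  qed
  have "inj_on f {0..?L}"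
  proof (rule inj_onI)
    fix a b assume "a \<in> {0..?L}" "b \<in> {0..?L}" "f a = f b"
    then show "a = b" using neq[of a b] neq[of b a] by (cases a b rule: linorder_cases) auto
  qed
  moreover have "f ` {0..?L} \<subseteq> ?C" unfolding f_def by auto
  ultimately have "card {0..?L} \<le> card ?C"
    using card_inj_on_le fin by blast
  then show ?thesis by simp
qed



lemma common_denom: "finite (F::rat set) \<Longrightarrow> \<exists>M::int. M > 0 \<and> (\<forall>x\<in>F. \<exists>k::int. of_int M * x = of_int k)"
proof (induction F rule: finite_induct)
  case empty show ?case by (intro exI[of _ 1]) auto
next
  case (insert y F)
  then obtain M where M: "M>0" "\<forall>x\<in>F. \<exists>k. of_int M * x = of_int k" by auto
  obtain p q where pq: "quotient_of y = (p,q)" by (cases "quotient_of y")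
  have q: "q > 0" using quotient_of_denom_pos[OF pq] .
  have y: "y = of_int p / of_int q" using quotient_of_div[OF pq] .
  have "\<forall>x\<in>insert y F. \<exists>k. of_int (M*q) * x = of_int k"
  proof
    fix x assume "x \<in> insert y F"
    then show "\<exists>k. of_int (M*q) * x = of_int k"
    proof
      assume "x = y" then show ?thesis using q by (intro exI[of _ "M*p"]) (simp add: y)
    next
      assume "x \<in> F" then obtain k where k: "of_int M * x = of_int k" using M by auto
      have "of_int (M*q) * x = of_int q * (of_int M * x)" by (simp add: algebra_simps)
      then show ?thesis using k by (intro exI[of _ "q*k"]) simp
    qed
  qed
  moreover have "M*q>0" using M q by simp
  ultimately show ?case by blast
qed

lemma span_sum: "finite A \<Longrightarrow> (\<forall>k\<in>A. f k \<in> int_span V) \<Longrightarrow> sum f A \<in> int_span V"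
  by (induction A rule: finite_induct) (auto intro: span_add span_zero)

lemma coset_eq: assumes h: "g - r \<in> int_span V" shows "(\<lambda>z. g+z) ` int_span V = (\<lambda>z. r+z) ` int_span V"
proof (rule equalityI)
  show "(\<lambda>z. g+z) ` int_span V \<subseteq> (\<lambda>z. r+z) ` int_span V"
  proof
    fix x assume "x \<in> (\<lambda>z. g+z) ` int_span V"
    then obtain z where z: "z \<in> int_span V" "x = g + z" by auto
    then have "x = r + ((g - r) + z)" by simp
    moreover have "(g - r) + z \<in> int_span V" using span_add h z by blast
    ultimately show "x \<in> (\<lambda>z. r+z) ` int_span V" by blast
  qed
  show "(\<lambda>z. r+z) ` int_span V \<subseteq> (\<lambda>z. g+z) ` int_span V"
  proof
    fix x assume "x \<in> (\<lambda>z. r+z) ` int_span V"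
    then obtain z where z: "z \<in> int_span V" "x = r + z" by auto
    then have "x = g + (z - (g - r))" by simp
    moreover have "z - (g - r) \<in> int_span V" using span_diff h z by blast
    ultimately show "x \<in> (\<lambda>z. g+z) ` int_span V" by blast
  qed
qed

definition Qv :: "int^'n \<Rightarrow> rat^'n" where "Qv v = (\<chi> i. of_int (v$i))"

lemma Qv_add: "Qv (a + b) = Qv a + Qv b" by (simp add: Qv_def vec_eq_iff)
lemma Qv_smult: "Qv (c *s a) = of_int c *s Qv a" by (simp add: Qv_def vec_eq_iff)
lemma Qv_zero: "Qv 0 = 0" by (simp add: Qv_def vec_eq_iff)
lemma Qv_sum: "Qv (sum f A) = (\<Sum>x\<in>A. Qv (f x))"
  by (induction A rule: infinite_finite_induct) (auto simp: Qv_zero Qv_add)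
lemma Qv_inj: "inj Qv" by (rule injI) (simp add: Qv_def vec_eq_iff)

lemma finite_index:
  fixes V :: "(int^'n) set"
  assumes card: "card V = CARD('n)" and ind: "int_lin_indep V"
  shows "finite {(\<lambda>z. g + z) ` int_span V | g. True}"
proof -
  have finV: "finite V" using card by (metis card.infinite zero_less_card_finite less_irrefl)
  have indQ: "vec.independent (Qv ` V)"
    unfolding vec.independent_explicit
  proof (intro conjI allI impI ballI)
    show "finite (Qv ` V)" using finV by simp
    fix c w assume c: "(\<Sum>v\<in>Qv ` V. c v *s v) = 0" and w: "w \<in> Qv ` V"
    obtain M where M: "M > 0" "\<forall>x\<in>(\<lambda>v. c (Qv v)) ` V. \<exists>k::int. of_int M * x = of_int k"
      using common_denom[of "(\<lambda>v. c (Qv v)) ` V"] finV by auto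
    have "\<forall>v\<in>V. \<exists>k::int. of_int M * c (Qv v) = of_int k" using M(2) by blast
    then obtain d where d': "\<forall>v\<in>V. of_int M * c (Qv v) = of_int (d v)" by (rule bchoice[elim_format]) blast
    then have d: "\<And>v. v \<in> V \<Longrightarrow> of_int M * c (Qv v) = of_int (d v)" by blast
    have "(\<Sum>v\<in>V. c (Qv v) *s Qv v) = 0" using c sum.reindex[OF inj_on_subset[OF Qv_inj subset_UNIV], of "\<lambda>v. c v *s v" V] by (simp add: o_def)
    then have "of_int M *s (\<Sum>v\<in>V. c (Qv v) *s Qv v) = 0" by simp
    then have "(\<Sum>v\<in>V. (of_int M * c (Qv v)) *s Qv v) = 0"
      by (simp add: vec_eq_iff sum_distrib_left mult.assoc)
    then have "(\<Sum>v\<in>V. of_int (d v) *s Qv v) = 0" using d by (simp cong: sum.cong)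
    then have "Qv (\<Sum>v\<in>V. d v *s v) = Qv 0" by (simp add: Qv_sum Qv_smult Qv_zero)
    then have "(\<Sum>v\<in>V. d v *s v) = 0" by (rule injD[OF Qv_inj])
    then have "\<forall>v\<in>V. d v = 0" using ind unfolding int_lin_indep_def by blast
    then show "c w = 0" using w d M(1) by fastforce
  qed
  have "card (Qv ` V) = CARD('n)" using card card_image[OF inj_on_subset[OF Qv_inj subset_UNIV], of V] by argo
  then have spanQ: "UNIV \<subseteq> vec.span (Qv ` V)"
  proof -
    have dd: "vec.dim (UNIV::(rat^'n) set) = CARD('n)" by (rule vec_dim_card)
    have "finite (Qv ` V)" using finV by simp
    then show ?thesis using vec.card_eq_dim[of "Qv ` V" UNIV] indQ dd \<open>card (Qv ` V) = CARD('n)\<close> by simp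
  qed
  have "\<forall>k. \<exists>u. Qv (axis k 1) = (\<Sum>w\<in>Qv ` V. u w *s w)"
    using spanQ vec.span_finite[of "Qv ` V"] finV by auto
  then obtain u where u: "\<And>k. Qv (axis k 1) = (\<Sum>w\<in>Qv ` V. u k w *s w)" by metis
  have "finite ((\<lambda>(k,v). u k (Qv v)) ` (UNIV \<times> V))" using finV by simp
  from common_denom[OF this] obtain M where M: "M > 0"
     "\<forall>x\<in>(\<lambda>(k,v). u k (Qv v)) ` (UNIV \<times> V). \<exists>j::int. of_int M * x = of_int j" by blast
  have "\<forall>kv\<in>UNIV \<times> V. \<exists>j::int. of_int M * u (fst kv) (Qv (snd kv)) = of_int j" using M(2) by fastforce
  then obtain d0 where d0: "\<forall>kv\<in>UNIV \<times> V. of_int M * u (fst kv) (Qv (snd kv)) = of_int (d0 kv)" by (rule bchoice[elim_format]) blast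
  define d where "d k v = d0 (k, v)" for k v
  have d: "\<And>k v. v \<in> V \<Longrightarrow> of_int M * u k (Qv v) = of_int (d k v)" using d0 unfolding d_def by fastforce
  have Mk: "M *s axis k 1 \<in> int_span V" for k
  proof -
    have "Qv (M *s axis k 1) = of_int M *s (\<Sum>v\<in>V. u k (Qv v) *s Qv v)"
      using u[of k] sum.reindex[OF inj_on_subset[OF Qv_inj subset_UNIV], of "\<lambda>w. u k w *s w" V] by (simp add: Qv_smult o_def)
    also have "\<dots> = (\<Sum>v\<in>V. (of_int M * u k (Qv v)) *s Qv v)"
      by (simp add: vec_eq_iff sum_distrib_left mult.assoc)
    also have "\<dots> = (\<Sum>v\<in>V. of_int (d k v) *s Qv v)" using d by (simp cong: sum.cong)
    also have "\<dots> = Qv (\<Sum>v\<in>V. d k v *s v)" by (simp add: Qv_sum Qv_smult)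
    finally have "M *s axis k 1 = (\<Sum>v\<in>V. d k v *s v)" by (rule injD[OF Qv_inj])
    then show ?thesis unfolding int_span_def by blast
  qed
  define R where "R = {r::int^'n. \<forall>i. r$i \<in> {0..<M}}"
  have finR: "finite R"
  proof -
    have "R \<subseteq> vec_lambda ` (PiE UNIV (\<lambda>_. {0..<M}))"
    proof
      fix r assume "r \<in> R"
      then have "(\<lambda>i. r$i) \<in> PiE UNIV (\<lambda>_. {0..<M})" unfolding R_def by auto
      moreover have "r = vec_lambda (\<lambda>i. r$i)" by simp
      ultimately show "r \<in> vec_lambda ` (PiE UNIV (\<lambda>_. {0..<M}))" by blast
    qed
    moreover have "finite (PiE (UNIV::'n set) (\<lambda>_. {0..<M}))" by (rule finite_PiE) auto
    ultimately show ?thesis using finite_subset by blast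
  qed
  have "{(\<lambda>z. g + z) ` int_span V | g. True} \<subseteq> (\<lambda>r. (\<lambda>z. r + z) ` int_span V) ` R"
  proof
    fix C assume "C \<in> {(\<lambda>z. g + z) ` int_span V | g. True}"
    then obtain g where g: "C = (\<lambda>z. g + z) ` int_span V" by auto
    define r where "r = (\<chi> i. g$i mod M)"
    have rR: "r \<in> R" unfolding R_def r_def using M(1) by auto
    have "g - r = (\<Sum>k\<in>UNIV. (g$k div M) *s (M *s axis k 1))"
    proof -
      have "(g - r)$i = (\<Sum>k\<in>UNIV. ((g$k div M) *s (M *s axis k 1))$i)" for i
      proof -
        have "(\<Sum>k\<in>UNIV. ((g$k div M) *s (M *s axis k 1))$i) = (\<Sum>k\<in>UNIV. if k = i then (g$i div M) * M else 0)"
          by (rule sum.cong) (auto simp: axis_def)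
        also have "\<dots> = (g$i div M) * M" by simp
        also have "\<dots> = (g - r)$i" unfolding r_def by (simp add: minus_mod_eq_mult_div)
        finally show ?thesis by simp
      qed
      then show ?thesis by (simp add: vec_eq_iff)
    qed
    also have "\<dots> \<in> int_span V" by (rule span_sum[OF finite]) (intro ballI span_smult Mk)
    finally have "C = (\<lambda>z. r + z) ` int_span V" using g coset_eq by blast
    then show "C \<in> (\<lambda>r. (\<lambda>z. r + z) ` int_span V) ` R" using rR by blast
  qed
  then show ?thesis using finR finite_subset by blast
qed



lemma sum_list_filter_nz: "sum_list (filter (\<lambda>x. x \<noteq> 0) l) = sum_list (l::'a::monoid_add list)"
  by (induction l) auto

lemma generation:
  fixes act :: "int ^ 'n \<Rightarrow> 'x::metric_space \<Rightarrow> 'x"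
  assumes ls: "length_space TYPE('x)" and iso: "isometric_action act"
    and qd: "quotient_diam_le act D" and Dpos: "D > 0"
  shows "\<exists>xs. set xs \<subseteq> {g. g \<noteq> 0 \<and> dist (act g x0) x0 \<le> 3 * D} \<and> sum_list xs = \<gamma>"
proof -
  have act0: "act 0 x = x" for x using iso unfolding isometric_action_def by blast
  have actadd: "act (g + h) x = act g (act h x)" for g h x using iso unfolding isometric_action_def by blast
  have actdist: "dist (act g x) (act g y) = dist x y" for g x y using iso unfolding isometric_action_def by blast
  from ls have "\<exists>p::real \<Rightarrow> 'x. continuous_on {0..1} p \<and> p 0 = x0 \<and> p 1 = act \<gamma> x0"
    unfolding length_space_def by (metis zero_less_one)
  then obtain p :: "real \<Rightarrow> 'x" where p: "continuous_on {0..1} p" "p 0 = x0" "p 1 = act \<gamma> x0" by blast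
  have "uniformly_continuous_on {0..1} p" using compact_uniformly_continuous p(1) compact_Icc by blast
  moreover have "D/3 > 0" using Dpos by simp
  ultimately obtain \<delta> where \<delta>: "\<delta> > 0" "\<And>x y. x\<in>{0..1} \<Longrightarrow> y\<in>{0..1} \<Longrightarrow> dist y x < \<delta> \<Longrightarrow> dist (p y) (p x) < D/3"
    unfolding uniformly_continuous_on_def by metis
  obtain N :: nat where N: "N > 0" "inverse (real N) < \<delta>" using ex_inverse_of_nat_less[OF \<delta>(1)] by auto
  define q where "q i = p (real i / real N)" for i
  have near: "\<exists>g. dist (q i) (act g x0) < 4*D/3" for i
  proof -
    have "(INF g. dist (q i) (act g x0)) \<le> D" using qd unfolding quotient_diam_le_def by blast
    then have "(INF g. dist (q i) (act g x0)) < 4*D/3" using Dpos by linarith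
    moreover have "bdd_below (range (\<lambda>g. dist (q i) (act g x0)))" by (rule bdd_belowI2[of _ 0]) simp
    ultimately show ?thesis using cINF_less_iff[of UNIV "\<lambda>g. dist (q i) (act g x0)" "4*D/3"] by blast
  qed
  then obtain g0 where g0: "\<And>i. dist (q i) (act (g0 i) x0) < 4*D/3" by metis
  define g where "g i = (if i = 0 then 0 else if i = N then \<gamma> else g0 i)" for i
  have gd: "dist (q i) (act (g i) x0) < 4*D/3" for i
  proof (cases "i = 0")
    case True then show ?thesis using Dpos p(2) by (simp add: g_def q_def act0)
  next
    case False
    show ?thesis
    proof (cases "i = N")
      case True then show ?thesis using Dpos p(3) N(1) by (simp add: g_def q_def)
    next
      case False then show ?thesis using \<open>i \<noteq> 0\<close> g0 by (simp add: g_def)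
    qed
  qed
  have step: "dist (act (g (Suc i) - g i) x0) x0 \<le> 3*D" if "i < N" for i
  proof -
    have "real i / real N \<in> {0..1}" "real (Suc i) / real N \<in> {0..1}" using that by auto
    moreover have "dist (real (Suc i) / real N) (real i / real N) < \<delta>"
      using N by (simp add: dist_real_def diff_divide_distrib[symmetric] divide_inverse algebra_simps)
    ultimately have "dist (q (Suc i)) (q i) < D/3" unfolding q_def using \<delta>(2) by blast
    then have "dist (act (g i) x0) (act (g (Suc i)) x0) < 3*D"
      using gd[of i] gd[of "Suc i"] dist_triangle[of "act (g i) x0" "act (g (Suc i)) x0" "q i"]
        dist_triangle[of "q i" "act (g (Suc i)) x0" "q (Suc i)"]
      by (simp add: dist_commute)
    moreover have "act (g i) (act (g (Suc i) - g i) x0) = act (g (Suc i)) x0"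
      by (simp add: actadd[symmetric])
    ultimately have "dist (act (g i) x0) (act (g i) (act (g (Suc i) - g i) x0)) < 3*D" by simp
    then show ?thesis using actdist by (simp add: dist_commute)
  qed
  define xs where "xs = filter (\<lambda>d. d \<noteq> 0) (map (\<lambda>i. g (Suc i) - g i) [0..<N])"
  have "sum_list xs = sum_list (map (\<lambda>i. g (Suc i) - g i) [0..<N])" unfolding xs_def by (rule sum_list_filter_nz)
  also have "\<dots> = (\<Sum>i<N. g (Suc i) - g i)"
    by (simp add: sum_set_upt_conv_sum_list_nat[symmetric] atLeast0LessThan)
  also have "\<dots> = g N - g 0" by (rule sum_lessThan_telescope)
  also have "\<dots> = \<gamma>" using N(1) by (simp add: g_def)
  finally have "sum_list xs = \<gamma>" .
  moreover have "set xs \<subseteq> {g. g \<noteq> 0 \<and> dist (act g x0) x0 \<le> 3 * D}"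
    unfolding xs_def using step by auto
  ultimately show ?thesis by blast
qed

lemma elem_bound:
  fixes \<Sigma> H S :: "'a::ab_group_add set"
  assumes sw: "\<And>s. s \<in> S \<Longrightarrow> \<exists>w. length w \<le> B \<and> set w \<subseteq> \<Sigma> \<union> uminus ` \<Sigma> \<and> sum_list w = s"
  and y: "y \<in> H \<union> uminus ` H"
  and H: "H \<subseteq> {si + \<sigma> - sj | si sj \<sigma>. si\<in>S \<and> sj\<in>S \<and> \<sigma>\<in>\<Sigma>}"
  shows "\<exists>w. length w \<le> 2*B+1 \<and> set w \<subseteq> \<Sigma> \<union> uminus ` \<Sigma> \<and> sum_list w = y"
proof -
  have hb: "\<exists>w. length w \<le> 2*B+1 \<and> set w \<subseteq> \<Sigma> \<union> uminus ` \<Sigma> \<and> sum_list w = h" if "h \<in> H" for h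
  proof -
    obtain si sj \<sigma> where h: "h = si + \<sigma> - sj" "si\<in>S" "sj\<in>S" "\<sigma>\<in>\<Sigma>" using H \<open>h \<in> H\<close> by blast
    obtain wi where wi: "length wi \<le> B" "set wi \<subseteq> \<Sigma> \<union> uminus ` \<Sigma>" "sum_list wi = si" using sw h(2) by blast
    obtain wj where wj: "length wj \<le> B" "set wj \<subseteq> \<Sigma> \<union> uminus ` \<Sigma>" "sum_list wj = sj" using sw h(3) by blast
    have "set (map uminus wj) \<subseteq> \<Sigma> \<union> uminus ` \<Sigma>" using neg_word[OF wj(2)] .
    then have "set (wi @ [\<sigma>] @ map uminus wj) \<subseteq> \<Sigma> \<union> uminus ` \<Sigma>" using wi(2) h(4) by auto
    moreover have "sum_list (wi @ [\<sigma>] @ map uminus wj) = h" using wi(3) wj(3) h(1) by (simp add: sum_list_neg)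
    moreover have "length (wi @ [\<sigma>] @ map uminus wj) \<le> 2*B+1" using wi(1) wj(1) by simp
    ultimately show ?thesis by blast
  qed
  from y show ?thesis
  proof
    assume "y \<in> H" then show ?thesis using hb by blast
  next
    assume "y \<in> uminus ` H"
    then obtain h where "h \<in> H" "y = - h" by auto
    then obtain w where w: "length w \<le> 2*B+1" "set w \<subseteq> \<Sigma> \<union> uminus ` \<Sigma>" "sum_list w = h" using hb by blast
    show ?thesis using neg_word[OF w(2)] w(1,3) \<open>y = - h\<close> by (intro exI[of _ "map uminus w"]) (simp add: sum_list_neg)
  qed
qed

theorem lemma2p2:
  fixes act :: "int ^ 'n \<Rightarrow> 'x::metric_space \<Rightarrow> 'x"
    and x0 :: 'x and D :: real
    and \<Sigma>n S :: "(int ^ 'n) set"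
  assumes "length_space TYPE('x)"
    and "isometric_action act" and "free_action act"
    and "properly_discontinuous act" and "cocompact act"
    and "quotient_diam_le act D"
  defines "\<Sigma>D \<equiv> {g. g \<noteq> 0 \<and> dist (act g x0) x0 \<le> 3 * D}"
  assumes "\<Sigma>n \<subseteq> \<Sigma>D" and "card \<Sigma>n = CARD('n)" and "int_lin_indep \<Sigma>n"
  defines "Z \<equiv> int_span \<Sigma>n"
  assumes "0 \<in> S"
    and "\<forall>g. \<exists>!s. s \<in> S \<and> g - s \<in> Z"
    and "\<forall>s\<in>S. \<forall>g. g - s \<in> Z \<longrightarrow> word_length \<Sigma>D s \<le> word_length \<Sigma>D g"
  defines "\<Sigma>hat \<equiv> {si + \<sigma> - sj | si sj \<sigma>. si \<in> S \<and> sj \<in> S \<and> \<sigma> \<in> \<Sigma>D \<and> si + \<sigma> - sj \<in> Z - {0}}"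
  shows "\<forall>\<gamma>\<in>Z. word_length \<Sigma>hat \<gamma> \<le> word_length \<Sigma>D \<gamma> \<and>
           real (word_length \<Sigma>D \<gamma>) \<le> (2 * real (group_index Z) + 1) * real (word_length \<Sigma>hat \<gamma>)"
proof -
  note cardn = assms(9) and indep = assms(10) and S0 = assms(12) and uniq = assms(13) and minl = assms(14)
  let ?T = "\<Sigma>D \<union> uminus ` \<Sigma>D"
  let ?I = "group_index Z"
  have "card \<Sigma>n > 0" using cardn by simp
  then have nen: "\<Sigma>n \<noteq> {}" by (metis card.empty less_irrefl)
  then obtain v where v: "v \<in> \<Sigma>n" by blast
  then have "v \<in> \<Sigma>D" using assms(8) by blast
  then have v2: "v \<noteq> 0" "dist (act v x0) x0 \<le> 3 * D" unfolding \<Sigma>D_def by auto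
  have "act v x0 \<noteq> x0" using assms(3) v2(1) unfolding free_action_def by blast
  then have "dist (act v x0) x0 > 0" by simp
  then have Dpos: "D > 0" using v2(2) by linarith
  have gen: "\<exists>xs. set xs \<subseteq> ?T \<and> sum_list xs = g" for g
  proof -
    obtain xs where "set xs \<subseteq> {g. g \<noteq> 0 \<and> dist (act g x0) x0 \<le> 3 * D}" "sum_list xs = g"
      using generation[OF assms(1,2,6) Dpos] by blast
    then have "set xs \<subseteq> \<Sigma>D" "sum_list xs = g" unfolding \<Sigma>D_def by simp_all
    then show ?thesis by (intro exI[of _ xs]) auto
  qed
  have Z0: "0 \<in> Z" unfolding Z_def by (rule span_zero)
  have Zsub: "a - b \<in> Z" if "a \<in> Z" "b \<in> Z" for a b using that unfolding Z_def by (rule span_diff)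
  have finC: "finite {(\<lambda>z. g + z) ` Z | g. True}" unfolding Z_def by (rule finite_index[OF cardn indep])
  define rep where "rep g = (THE s. s \<in> S \<and> g - s \<in> Z)" for g
  have rep: "rep g \<in> S \<and> g - rep g \<in> Z" for g
    unfolding rep_def by (rule theI') (use uniq in blast)
  have rep_eq: "rep g = s" if "s \<in> S" "g - s \<in> Z" for g s
    unfolding rep_def by (rule the1_equality) (use uniq that in blast)+
  have Hmem: "si+\<sigma>-sj \<in> \<Sigma>hat" if "si \<in> S" "sj \<in> S" "\<sigma> \<in> \<Sigma>D" "si+\<sigma>-sj \<in> Z-{0}" for si sj \<sigma>
    unfolding \<Sigma>hat_def using that by blast
  have sbound: "\<exists>w. length w \<le> ?I \<and> set w \<subseteq> ?T \<and> sum_list w = s" if "s \<in> S" for s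
  proof -
    have "word_length \<Sigma>D s < card {(\<lambda>z. g + z) ` Z | g. True}"
      by (rule rep_bound[OF Z0 Zsub finC gen]) (use minl that in blast)+
    then have le: "word_length \<Sigma>D s \<le> ?I" unfolding group_index_def by (rule less_imp_le)
    obtain w0 where "set w0 \<subseteq> ?T" "sum_list w0 = s" using gen by blast
    from wl_ex[OF this] obtain w where "length w = word_length \<Sigma>D s" "set w \<subseteq> ?T" "sum_list w = s"
      by blast
    then show ?thesis using le by (intro exI[of _ w]) simp
  qed
  have Hsub: "\<Sigma>hat \<subseteq> {si + \<sigma> - sj | si sj \<sigma>. si\<in>S \<and> sj\<in>S \<and> \<sigma>\<in>\<Sigma>D}" unfolding \<Sigma>hat_def by blast
  show ?thesis
  proof
    fix \<gamma> assume \<gamma>Z: "\<gamma> \<in> Z"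
    obtain w0 where "set w0 \<subseteq> ?T" "sum_list w0 = \<gamma>" using gen by blast
    from wl_ex[OF this] obtain xs where xs: "length xs = word_length \<Sigma>D \<gamma>" "set xs \<subseteq> ?T" "sum_list xs = \<gamma>"
      by blast
    obtain ys where ys: "length ys \<le> length xs" "set ys \<subseteq> \<Sigma>hat \<union> uminus ` \<Sigma>hat"
      "sum_list ys = rep 0 + sum_list xs - rep (0 + sum_list xs)"
      using tele[of Z rep S \<Sigma>D \<Sigma>hat xs 0] Zsub rep Hmem xs(2) by blast
    have "rep 0 = 0" using rep_eq[OF S0] Z0 by simp
    moreover have "rep \<gamma> = 0" using rep_eq[OF S0] \<gamma>Z by simp
    ultimately have ysum: "sum_list ys = \<gamma>" using ys(3) xs(3) by simp
    have first: "word_length \<Sigma>hat \<gamma> \<le> word_length \<Sigma>D \<gamma>"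
      using wl_le[OF ys(2) ysum] ys(1) xs(1) by simp
    obtain zs where zs: "length zs = word_length \<Sigma>hat \<gamma>" "set zs \<subseteq> \<Sigma>hat \<union> uminus ` \<Sigma>hat" "sum_list zs = \<gamma>"
      using wl_ex[OF ys(2) ysum] by blast
    have "\<forall>y\<in>set zs. \<exists>w. length w \<le> 2*?I+1 \<and> set w \<subseteq> ?T \<and> sum_list w = y"
      using elem_bound[OF sbound _ Hsub] zs(2) by blast
    from concat_words[OF this] obtain ws where ws: "length ws \<le> (2*?I+1) * length zs" "set ws \<subseteq> ?T" "sum_list ws = \<gamma>"
      using zs(3) by auto
    have "word_length \<Sigma>D \<gamma> \<le> (2*?I+1) * word_length \<Sigma>hat \<gamma>"
      using wl_le[OF ws(2,3)] ws(1) zs(1) by simp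
    then have "real (word_length \<Sigma>D \<gamma>) \<le> real ((2*?I+1) * word_length \<Sigma>hat \<gamma>)" by linarith
    then have "real (word_length \<Sigma>D \<gamma>) \<le> (2 * real ?I + 1) * real (word_length \<Sigma>hat \<gamma>)" by (simp add: algebra_simps)
    then show "word_length \<Sigma>hat \<gamma> \<le> word_length \<Sigma>D \<gamma> \<and>
           real (word_length \<Sigma>D \<gamma>) \<le> (2 * real ?I + 1) * real (word_length \<Sigma>hat \<gamma>)" using first by blast
  qed
qed

end
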